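(* A compact Hausdorff space $X$ belongs to the class $\mathcal A$ if and only if $X$ is scattered and hereditarily paracompact.
   Context: A topological space is scattered if each nonempty subspace has an isolated point. For a locally compact Hausdorff space $Y$, an Aleksandrov compactification of $Y$ is a compactification $\overline Y$ of $Y$ with $|\overline Y\setminus Y|\le 1$. The class $\mathcal A$ is the smallest class of compact spaces that contains the empty space and the one-point space and is closed under taking the Aleksandrov compactification of a topological sum $\bigoplus_{i\in I}K_i$ of any family $\{K_i\}_{i\in I}$ of spaces from $\mathcal A$. *)

theory Defs
  imports "HOL-Analysis.Analysis"
begin

definition scattered_space :: "'a topology \<Rightarrow> bool" where
  "scattered_space X \<longleftrightarrow>
     (\<forall>S. S \<subseteq> topspace X \<and> S \<noteq> {} \<longrightarrow> (\<exists>x\<in>S. openin (subtopology X S) {x}))"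

definition paracompact_space :: "'a topology \<Rightarrow> bool" where
  "paracompact_space X \<longleftrightarrow>
     (\<forall>\<U>. (\<forall>U\<in>\<U>. openin X U) \<and> \<Union>\<U> = topspace X \<longrightarrow>
        (\<exists>\<V>. (\<forall>V\<in>\<V>. openin X V) \<and> \<Union>\<V> = topspace X \<and>
             (\<forall>V\<in>\<V>. \<exists>U\<in>\<U>. V \<subseteq> U) \<and> locally_finite_in X \<V>))"

definition hereditarily_paracompact_space :: "'a topology \<Rightarrow> bool" where
  "hereditarily_paracompact_space X \<longleftrightarrow>
     (\<forall>S. S \<subseteq> topspace X \<longrightarrow> paracompact_space (subtopology X S))"

text \<open>The class A, rendered intrinsically (up to homeomorphism): X is in A iff X is empty,
  a single point, or X is a (Hausdorff) compactification of an open dense subspace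
  Y = topspace X - P with at most one remaining point, where Y is the topological sum of
  the pairwise disjoint open pieces U in a family, each piece (as a subspace) in A.\<close>
inductive classA :: "'a topology \<Rightarrow> bool" where
  empty: "topspace X = {} \<Longrightarrow> classA X"
| point: "topspace X = {a} \<Longrightarrow> classA X"
| alex: "\<lbrakk>compact_space X; Hausdorff_space X;
          P \<subseteq> topspace X; P = {} \<or> (\<exists>p. P = {p});
          X closure_of (topspace X - P) = topspace X;
          \<Union>\<U> = topspace X - P; pairwise disjnt \<U>;
          \<forall>U\<in>\<U>. openin X U \<and> classA (subtopology X U)\<rbrakk> \<Longrightarrow> classA X"

end

theory Submission
  imports Defs
begin


lemma classA_clopen:
  assumes "classA X" "closedin X C" "openin X C"
  shows "classA (subtopology X C)"
  using assms
proof (induction arbitrary: C rule: classA.induct)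
  case (empty X)
  then show ?case by (intro classA.empty) auto
next
  case (point X a)
  then have "C \<subseteq> {a}" using closedin_subset by fastforce
  then have "C = {} \<or> C = {a}" by blast
  then show ?case
  proof
    assume "C = {}" then show ?thesis using point by (intro classA.empty) auto
  next
    assume "C = {a}" then show ?thesis using point by (intro classA.point[of _ a]) auto
  qed
next
  case (alex X P \<U>)
  let ?Z = "subtopology X C"
  have Csub: "C \<subseteq> topspace X" using alex.prems(1) closedin_subset by blast
  show ?case
  proof (rule classA.alex[where P="P \<inter> C" and \<U>="(\<lambda>U. U \<inter> C) ` \<U>"])
    show "compact_space ?Z"
      using alex.hyps(1) alex.prems(1) closedin_compact_space compact_space_subtopology by blast
    show "Hausdorff_space ?Z" using alex.hyps(2) Hausdorff_space_subtopology by blast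
    show "P \<inter> C \<subseteq> topspace ?Z" using alex.hyps(3) by auto
    show "P \<inter> C = {} \<or> (\<exists>p. P \<inter> C = {p})" using alex(4) by blast
    have "C \<inter> X closure_of (topspace X - P) \<subseteq> X closure_of (C \<inter> (topspace X - P))"
      using openin_Int_closure_of_subset[OF alex.prems(2)] by blast
    moreover have "C \<inter> (topspace X - P) = topspace ?Z - P \<inter> C" using Csub by auto
    ultimately have "C \<subseteq> X closure_of (topspace ?Z - P \<inter> C)"
      using alex(5) Csub by auto
    moreover have "X closure_of (topspace ?Z - P \<inter> C) \<subseteq> topspace X"
      by (simp add: closure_of_subset_topspace)
    ultimately show "?Z closure_of (topspace ?Z - P \<inter> C) = topspace ?Z"
      using Csub by (auto simp: closure_of_subtopology_open[OF disjI1, OF alex.prems(2)])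
    show "\<Union> ((\<lambda>U. U \<inter> C) ` \<U>) = topspace ?Z - P \<inter> C" using alex(6) by auto
    show "pairwise disjnt ((\<lambda>U. U \<inter> C) ` \<U>)"
      using alex(7) unfolding pairwise_def disjnt_def by blast
    show "\<forall>U\<in>(\<lambda>U. U \<inter> C) ` \<U>. openin ?Z U \<and> classA (subtopology ?Z U)"
    proof
      fix V assume "V \<in> (\<lambda>U. U \<inter> C) ` \<U>"
      then obtain U where U: "U \<in> \<U>" "V = U \<inter> C" by blast
      have oU: "openin X U" using alex.IH U by blast
      have "openin ?Z V" using U oU openin_subtopology_Int by blast
      moreover
      have "closedin (subtopology X U) (U \<inter> C)"
        using alex.prems(1) closedin_subtopology_Int_closed by (metis inf_commute)
      moreover have "openin (subtopology X U) (U \<inter> C)"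
        using alex.prems(2) openin_subtopology_Int2 by blast
      ultimately have "classA (subtopology (subtopology X U) (U \<inter> C))"
        using alex.IH U by blast
      moreover have "subtopology (subtopology X U) (U \<inter> C) = subtopology ?Z V"
        using U by (simp add: subtopology_subtopology Int_ac)
      ultimately show "openin ?Z V \<and> classA (subtopology ?Z V)" using \<open>openin ?Z V\<close> by simp
    qed
  qed
qed



lemma finite_paracompact:
  assumes "finite (topspace X)"
  shows "paracompact_space X"
  unfolding paracompact_space_def
proof (intro allI impI)
  fix \<U> assume H: "(\<forall>U\<in>\<U>. openin X U) \<and> \<Union>\<U> = topspace X"
  have "\<U> \<subseteq> Pow (topspace X)" using H by auto
  then have "finite \<U>" using assms by (rule finite_subset[OF _ finite_Pow_iff[THEN iffD2]])
  then show "\<exists>\<V>. (\<forall>V\<in>\<V>. openin X V) \<and> \<Union>\<V> = topspace X \<and>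
             (\<forall>V\<in>\<V>. \<exists>U\<in>\<U>. V \<subseteq> U) \<and> locally_finite_in X \<V>"
    using H by (intro exI[of _ \<U>]) (auto intro: finite_imp_locally_finite_in)
qed

lemma scattered_finite:
  assumes "topspace X = {} \<or> topspace X = {a}"
  shows "scattered_space X"
  unfolding scattered_space_def
proof (intro allI impI)
  fix S assume S: "S \<subseteq> topspace X \<and> S \<noteq> {}"
  then have "S = {a}" using assms by auto
  then show "\<exists>x\<in>S. openin (subtopology X S) {x}"
    using S by (metis inf.absorb_iff2 insertI1 openin_topspace topspace_subtopology)
qed

lemma hp_finite:
  assumes "finite (topspace X)"
  shows "hereditarily_paracompact_space X"
  unfolding hereditarily_paracompact_space_def
  using assms by (auto intro!: finite_paracompact)



lemma openin_sub: "openin X S \<Longrightarrow> S \<subseteq> T \<Longrightarrow> openin (subtopology X T) S"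
  unfolding openin_subtopology by blast

lemma alex_scattered:
  assumes P: "P \<subseteq> topspace X" "P = {} \<or> (\<exists>p. P = {p})" and U: "\<Union>\<U> = topspace X - P"
    and IH: "\<forall>U\<in>\<U>. openin X U \<and> scattered_space (subtopology X U)"
  shows "scattered_space X"
  unfolding scattered_space_def
proof (intro allI impI)
  fix S assume S: "S \<subseteq> topspace X \<and> S \<noteq> {}"
  show "\<exists>x\<in>S. openin (subtopology X S) {x}"
  proof (cases "S \<subseteq> P")
    case True
    then obtain p where p: "S = {p}" using P(2) S by auto
    then have "topspace (subtopology X S) = {p}" using S by auto
    then show ?thesis using p by (metis insertI1 openin_topspace)
  next
    case False
    then obtain x where x: "x \<in> S" "x \<notin> P" by blast
    then have "x \<in> \<Union>\<U>" using S U by blast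
    then obtain U where Ux: "U \<in> \<U>" "x \<in> U" by blast
    have oU: "openin X U" and sU: "scattered_space (subtopology X U)" using IH Ux by auto
    have "S \<inter> U \<subseteq> topspace (subtopology X U)" "S \<inter> U \<noteq> {}"
      using S Ux x openin_subset[OF oU] by auto
    then obtain y where y: "y \<in> S \<inter> U" "openin (subtopology (subtopology X U) (S \<inter> U)) {y}"
      using sU unfolding scattered_space_def by blast
    have "subtopology (subtopology X U) (S \<inter> U) = subtopology (subtopology X S) (S \<inter> U)"
      by (simp add: subtopology_subtopology Int_ac)
    moreover have "openin (subtopology X S) (S \<inter> U)" using oU by (simp add: openin_subtopology_Int2)
    ultimately have "openin (subtopology X S) {y}" using y openin_trans_full by metis
    then show ?thesis using y by blast
  qed
qed

lemma alex_hp: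
  assumes comp: "compact_space X" and H: "Hausdorff_space X"
    and P: "P \<subseteq> topspace X" "P = {} \<or> (\<exists>p. P = {p})"
    and U: "\<Union>\<U> = topspace X - P" "pairwise disjnt \<U>"
    and IH: "\<forall>U\<in>\<U>. openin X U \<and> hereditarily_paracompact_space (subtopology X U)"
  shows "hereditarily_paracompact_space X"
  unfolding hereditarily_paracompact_space_def paracompact_space_def
proof (intro allI impI)
  fix S \<W>
  assume S: "S \<subseteq> topspace X"
  assume W: "(\<forall>W\<in>\<W>. openin (subtopology X S) W) \<and> \<Union>\<W> = topspace (subtopology X S)"
  let ?Z = "subtopology X S"
  have tZ: "topspace ?Z = S" using S by auto
  have Wsub: "W \<subseteq> S" if "W \<in> \<W>" for W using W that openin_subset tZ by metis
  show "\<exists>\<V>. (\<forall>V\<in>\<V>. openin ?Z V) \<and> \<Union>\<V> = topspace ?Z \<and>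
             (\<forall>V\<in>\<V>. \<exists>U\<in>\<W>. V \<subseteq> U) \<and> locally_finite_in ?Z \<V>"
  proof (cases "S = {}")
    case True
    then show ?thesis
      by (intro exI[of _ "{}"]) (auto simp: locally_finite_in_def tZ)
  next
    case Sne: False
    have "\<exists>W0 O'. openin ?Z W0 \<and> (\<exists>W\<in>\<W>. W0 \<subseteq> W) \<and> openin X O' \<and> P \<inter> S \<subseteq> O'
                \<and> S \<inter> X closure_of O' \<subseteq> W0"
    proof (cases "P \<inter> S = {}")
      case True
      have "\<W> \<noteq> {}" using W tZ Sne by auto
      then show ?thesis using True by (intro exI[of _ "{}"]) auto
    next
      case False
      then obtain p where p: "P \<inter> S = {p}" "p \<in> S" using P(2) by auto
      then obtain W0 where W0: "W0 \<in> \<W>" "p \<in> W0" using W tZ by auto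
      then obtain Ob where O: "openin X Ob" "W0 = Ob \<inter> S"
        using W openin_subtopology by metis
      have reg: "regular_space X" using comp H compact_Hausdorff_imp_regular_space by blast
      have "closedin X (topspace X - Ob)" using O(1) by blast
      moreover have "p \<in> topspace X - (topspace X - Ob)" using p S O W0 by auto
      ultimately obtain O' where O': "openin X O'" "p \<in> O'" "disjnt (topspace X - Ob) (X closure_of O')"
        using reg unfolding regular_space by blast
      have "S \<inter> X closure_of O' \<subseteq> W0"
        using O' O S closure_of_subset_topspace[of X O'] unfolding disjnt_def by blast
      moreover have "openin ?Z W0" using W W0(1) by blast
      moreover have "P \<inter> S \<subseteq> O'" using p(1) O'(2) by simp
      ultimately show ?thesis using W0(1) O'(1) by blast
    qed
    then obtain W0 O' where W0: "openin ?Z W0" "\<exists>W\<in>\<W>. W0 \<subseteq> W"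
      and O': "openin X O'" "P \<inter> S \<subseteq> O'" "S \<inter> X closure_of O' \<subseteq> W0" by blast
    let ?cl = "X closure_of O'"
    have W0S: "W0 \<subseteq> S" using W0(1) openin_subset tZ by metis
    have O'cl: "O' \<subseteq> ?cl" using O'(1) closure_of_subset openin_subset by metis
    define \<A> where "\<A> U = (\<lambda>W. W \<inter> U - ?cl) ` \<W> \<union> {W0 \<inter> U}" for U
    have exU: "\<exists>\<V>. (\<forall>V\<in>\<V>. openin (subtopology X (S \<inter> U)) V) \<and> \<Union>\<V> = S \<inter> U \<and>
            (\<forall>V\<in>\<V>. \<exists>A\<in>\<A> U. V \<subseteq> A) \<and> locally_finite_in (subtopology X (S \<inter> U)) \<V>"
      if UU: "U \<in> \<U>" for U
    proof -
      have oU: "openin X U" and hU: "hereditarily_paracompact_space (subtopology X U)"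
        using IH UU by auto
      have "S \<inter> U \<subseteq> topspace (subtopology X U)" using S by auto
      then have "paracompact_space (subtopology (subtopology X U) (S \<inter> U))"
        using hU unfolding hereditarily_paracompact_space_def by blast
      moreover have "U \<inter> (S \<inter> U) = S \<inter> U" by blast
      ultimately have pc: "paracompact_space (subtopology X (S \<inter> U))"
        by (simp add: subtopology_subtopology)
      have tSU: "topspace (subtopology X (S \<inter> U)) = S \<inter> U" using S by auto
      have opA: "openin (subtopology X (S \<inter> U)) A" if "A \<in> \<A> U" for A
      proof -
        have "A = W0 \<inter> U \<or> (\<exists>W\<in>\<W>. A = W \<inter> U - ?cl)" using that \<A>_def by auto
        then show ?thesis
        proof
          assume A: "A = W0 \<inter> U"
          obtain Ob where O: "openin X Ob" "W0 = Ob \<inter> S" using W0(1) openin_subtopology by metis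
          have "A = (Ob \<inter> U) \<inter> (S \<inter> U)" using A O by blast
          moreover have "openin X (Ob \<inter> U)" using O oU by blast
          ultimately show ?thesis unfolding openin_subtopology by blast
        next
          assume "\<exists>W\<in>\<W>. A = W \<inter> U - ?cl"
          then obtain W where Wm: "W \<in> \<W>" "A = W \<inter> U - ?cl" by blast
          obtain Ob where O: "openin X Ob" "W = Ob \<inter> S" using W Wm(1) openin_subtopology by metis
          have "A = (Ob \<inter> U - ?cl) \<inter> (S \<inter> U)" using Wm O by blast
          moreover have "openin X (Ob \<inter> U - ?cl)" using O oU by (intro openin_diff openin_Int closedin_closure_of)
          ultimately show ?thesis unfolding openin_subtopology by blast
        qed
      qed
      have "\<Union>(\<A> U) = S \<inter> U"
      proof
        show "\<Union>(\<A> U) \<subseteq> S \<inter> U" using W0S Wsub unfolding \<A>_def by blast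
        show "S \<inter> U \<subseteq> \<Union>(\<A> U)"
        proof
          fix x assume x: "x \<in> S \<inter> U"
          show "x \<in> \<Union>(\<A> U)"
          proof (cases "x \<in> ?cl")
            case True
            then have "x \<in> W0 \<inter> U" using x O'(3) by blast
            then show ?thesis unfolding \<A>_def by blast
          next
            case False
            obtain W where "W \<in> \<W>" "x \<in> W" using x W tZ by auto
            then have "x \<in> W \<inter> U - ?cl" using x False by blast
            then show ?thesis unfolding \<A>_def using \<open>W \<in> \<W>\<close> by blast
          qed
        qed
      qed
      then have cov: "(\<forall>A\<in>\<A> U. openin (subtopology X (S \<inter> U)) A) \<and> \<Union>(\<A> U) = topspace (subtopology X (S \<inter> U))"
        using opA tSU by simp
      show ?thesis
        using pc[unfolded paracompact_space_def, rule_format, OF cov] unfolding tSU .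
    qed
    have ex: "\<forall>U\<in>\<U>. \<exists>\<V>. (\<forall>V\<in>\<V>. openin (subtopology X (S \<inter> U)) V) \<and> \<Union>\<V> = S \<inter> U \<and>
            (\<forall>V\<in>\<V>. \<exists>A\<in>\<A> U. V \<subseteq> A) \<and> locally_finite_in (subtopology X (S \<inter> U)) \<V>"
      by (rule ballI, rule exU)
    obtain f where f0: "\<forall>U\<in>\<U>. (\<forall>V\<in>f U. openin (subtopology X (S \<inter> U)) V) \<and> \<Union>(f U) = S \<inter> U \<and>
            (\<forall>V\<in>f U. \<exists>A\<in>\<A> U. V \<subseteq> A) \<and> locally_finite_in (subtopology X (S \<inter> U)) (f U)"
      using bchoice[OF ex] by (elim exE) (rule that)
    note f = bspec[OF f0]
    define \<F> where "\<F> = insert W0 {V. \<exists>U\<in>\<U>. V \<in> f U \<and> V \<inter> O' = {}}"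
    show ?thesis
    proof (intro exI[of _ \<F>] conjI ballI)
      fix V assume V: "V \<in> \<F>"
      show "openin ?Z V"
      proof (cases "V = W0")
        case True then show ?thesis using W0 by simp
      next
        case False
        then obtain U where UV: "U \<in> \<U>" "V \<in> f U" using V \<F>_def by blast
        then have "openin (subtopology X (S \<inter> U)) V" using f by blast
        moreover have "subtopology X (S \<inter> U) = subtopology ?Z (S \<inter> U)"
          by (simp add: subtopology_subtopology)
        moreover have "openin ?Z (S \<inter> U)" using IH UV by (simp add: openin_subtopology_Int2)
        ultimately show ?thesis using openin_trans_full by metis
      qed
      show "\<exists>W\<in>\<W>. V \<subseteq> W"
      proof (cases "V = W0")
        case True then show ?thesis using W0 by simp
      next
        case False
        then obtain U where UV: "U \<in> \<U>" "V \<in> f U" using V \<F>_def by blast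
        then obtain A where A: "A \<in> \<A> U" "V \<subseteq> A" using f by blast
        then have "A = W0 \<inter> U \<or> (\<exists>W\<in>\<W>. A = W \<inter> U - ?cl)" using \<A>_def by auto
        then show ?thesis using A W0(2) by blast
      qed
    next
      show "\<Union>\<F> = topspace ?Z"
      proof
        have "V \<subseteq> S" if VF: "V \<in> \<F>" for V
        proof (cases "V = W0")
          case True then show ?thesis using W0S by simp
        next
          case False
          then obtain U where UV: "U \<in> \<U>" "V \<in> f U" using VF \<F>_def by blast
          then show ?thesis using f by blast
        qed
        then show "\<Union>\<F> \<subseteq> topspace ?Z" using tZ by blast
        show "topspace ?Z \<subseteq> \<Union>\<F>"
        proof
          fix x assume "x \<in> topspace ?Z"
          then have x: "x \<in> S" using tZ by simp
          show "x \<in> \<Union>\<F>"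
          proof (cases "x \<in> W0")
            case True then show ?thesis unfolding \<F>_def by blast
          next
            case False
            have "x \<notin> P"
            proof
              assume "x \<in> P"
              then have "x \<in> ?cl" using x O'(2) O'cl by blast
              then show False using x O'(3) False by blast
            qed
            then obtain U where UU: "U \<in> \<U>" "x \<in> U" using U(1) x S by blast
            then obtain V where V: "V \<in> f U" "x \<in> V" using f x by blast
            then obtain A where A: "A \<in> \<A> U" "V \<subseteq> A" using f UU by blast
            have "A \<noteq> W0 \<inter> U" using A V False by blast
            then obtain W where "A = W \<inter> U - ?cl" using A(1) \<A>_def by auto
            then have "V \<inter> O' = {}" using A O'cl by blast
            then have "V \<in> \<F>" unfolding \<F>_def using UU V by blast
            then show ?thesis using V by blast
          qed
        qed
      qed
    next
      show "locally_finite_in ?Z \<F>"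
        unfolding locally_finite_in_def
      proof (intro conjI ballI)
        have "V \<subseteq> S" if VF: "V \<in> \<F>" for V
        proof (cases "V = W0")
          case True then show ?thesis using W0S by simp
        next
          case False
          then obtain U where UV: "U \<in> \<U>" "V \<in> f U" using VF \<F>_def by blast
          then show ?thesis using f by blast
        qed
        then show "\<Union>\<F> \<subseteq> topspace ?Z" using tZ by blast
        fix x assume "x \<in> topspace ?Z"
        then have x: "x \<in> S" using tZ by simp
        show "\<exists>M. openin ?Z M \<and> x \<in> M \<and> finite {V \<in> \<F>. V \<inter> M \<noteq> {}}"
        proof (cases "x \<in> P")
          case True
          have "openin ?Z (S \<inter> O')" using O'(1) by (simp add: openin_subtopology_Int2)
          moreover have "x \<in> S \<inter> O'" using True x O'(2) by blast
          moreover have "{V \<in> \<F>. V \<inter> (S \<inter> O') \<noteq> {}} \<subseteq> {W0}" unfolding \<F>_def by blast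
          then have "finite {V \<in> \<F>. V \<inter> (S \<inter> O') \<noteq> {}}" using finite_subset by blast
          ultimately show ?thesis by blast
        next
          case False
          then obtain U where UU: "U \<in> \<U>" "x \<in> U" using U(1) x S by blast
          have "x \<in> topspace (subtopology X (S \<inter> U))" using x UU S by auto
          then obtain M where M: "openin (subtopology X (S \<inter> U)) M" "x \<in> M"
            "finite {V \<in> f U. V \<inter> M \<noteq> {}}"
            using f[OF UU(1)] unfolding locally_finite_in_def by blast
          have "subtopology X (S \<inter> U) = subtopology ?Z (S \<inter> U)"
            by (simp add: subtopology_subtopology)
          moreover have "openin ?Z (S \<inter> U)" using IH UU by (simp add: openin_subtopology_Int2)
          ultimately have oM: "openin ?Z M" using M(1) openin_trans_full by metis
          have MU: "M \<subseteq> S \<inter> U" using M(1) openin_subset by fastforce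
          have "{V \<in> \<F>. V \<inter> M \<noteq> {}} \<subseteq> insert W0 {V \<in> f U. V \<inter> M \<noteq> {}}"
          proof
            fix V assume V: "V \<in> {V \<in> \<F>. V \<inter> M \<noteq> {}}"
            show "V \<in> insert W0 {V \<in> f U. V \<inter> M \<noteq> {}}"
            proof (cases "V = W0")
              case True then show ?thesis by simp
            next
              case False
              then obtain U' where UV: "U' \<in> \<U>" "V \<in> f U'" using V \<F>_def by blast
              then have "V \<subseteq> S \<inter> U'" using f by blast
              then have "U' \<inter> U \<noteq> {}" using V MU by blast
              then have "U' = U" using U(2) UV(1) UU(1) unfolding pairwise_def disjnt_def by blast
              then show ?thesis using UV V by blast
            qed
          qed
          then have "finite {V \<in> \<F>. V \<inter> M \<noteq> {}}" using M(3) finite_subset by blast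
          then show ?thesis using oM M(2) by blast
        qed
      qed
    qed
  qed
qed



lemma zero_dim:
  assumes comp: "compact_space X" and H: "Hausdorff_space X" and sc: "scattered_space X"
    and O: "openin X Ob" "x \<in> Ob"
  shows "\<exists>C. closedin X C \<and> openin X C \<and> x \<in> C \<and> C \<subseteq> Ob"
proof -
  have xt: "x \<in> topspace X" using openin_subset O by blast
  let ?K = "connected_component_of_set X x"
  have Kx: "x \<in> ?K" using xt by (simp add: connected_component_of_refl)
  have Ksub: "?K \<subseteq> topspace X" by (rule connected_component_of_subset_topspace)
  have "?K \<subseteq> topspace X \<and> ?K \<noteq> {}" using Kx Ksub by blast
  then have "\<exists>y\<in>?K. openin (subtopology X ?K) {y}"
    by (rule sc[unfolded scattered_space_def, rule_format])
  then obtain y where y: "y \<in> ?K" "openin (subtopology X ?K) {y}" by blast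
  have "y \<in> topspace X" using y(1) Ksub by blast
  then have "closedin X {y}" by (intro closedin_t1_singleton Hausdorff_imp_t1_space[OF H])
  then have cy: "closedin (subtopology X ?K) {y}" using y(1) by (simp add: closedin_subset_topspace)
  have "connectedin (subtopology X ?K) ?K"
    by (simp add: connectedin_subtopology connectedin_connected_component_of)
  then have "?K \<subseteq> {y} \<or> disjnt ?K {y}" using connectedin_clopen_cases cy y(2) by metis
  then have K: "?K = {x}" using y(1) Kx by (auto simp: disjnt_def)
  have "{x} \<in> connected_components_of X"
    using K xt connected_component_in_connected_components_of by metis
  moreover have "locally_compact_space X" using comp compact_imp_locally_compact_space by blast
  moreover have "compactin X {x}" using xt by simp
  moreover have "closedin X (topspace X - Ob)" using O by blast
  moreover have "disjnt {x} (topspace X - Ob)" using O by (simp add: disjnt_def)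
  ultimately have "separated_between X {x} (topspace X - Ob)"
    using separated_between_compact_connected_component H by blast
  then obtain U where U: "closedin X U" "openin X U" "{x} \<subseteq> U" "topspace X - Ob \<subseteq> topspace X - U"
    unfolding separated_between by blast
  have "U \<subseteq> Ob" using U(2) U(4) openin_subset by blast
  then show ?thesis using U by blast
qed

lemma disjointify:
  assumes lf: "locally_finite_in Y \<C>" and clo: "\<forall>C\<in>\<C>. closedin Y C \<and> openin Y C"
    and cov: "\<Union>\<C> = topspace Y"
  shows "\<exists>\<D>. pairwise disjnt \<D> \<and> \<Union>\<D> = topspace Y \<and>
              (\<forall>D\<in>\<D>. closedin Y D \<and> openin Y D \<and> (\<exists>C\<in>\<C>. D \<subseteq> C))"
proof -
  obtain r where r: "well_order_on \<C> r" using well_order_on by blast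
  have tot: "total_on \<C> r" and wf: "wf (r - Id)"
    using r unfolding well_order_on_def linear_order_on_def by auto
  define D where "D C = C - \<Union>{C'\<in>\<C>. (C',C) \<in> r \<and> C' \<noteq> C}" for C
  show ?thesis
  proof (intro exI[of _ "D ` \<C>"] conjI ballI)
    show "pairwise disjnt (D ` \<C>)"
      unfolding pairwise_def
    proof (clarify)
      fix C1 C2 assume C: "C1 \<in> \<C>" "C2 \<in> \<C>" "D C1 \<noteq> D C2"
      then have "C1 \<noteq> C2" by auto
      then have "(C1,C2) \<in> r \<or> (C2,C1) \<in> r" using tot C unfolding total_on_def by blast
      then show "disjnt (D C1) (D C2)"
      proof
        assume "(C1,C2) \<in> r"
        then show ?thesis using C \<open>C1 \<noteq> C2\<close> unfolding D_def disjnt_def by blast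
      next
        assume "(C2,C1) \<in> r"
        then show ?thesis using C \<open>C1 \<noteq> C2\<close> unfolding D_def disjnt_def by blast
      qed
    qed
    show "\<Union>(D ` \<C>) = topspace Y"
    proof
      show "\<Union>(D ` \<C>) \<subseteq> topspace Y" using cov unfolding D_def by blast
      show "topspace Y \<subseteq> \<Union>(D ` \<C>)"
      proof
        fix x assume "x \<in> topspace Y"
        then obtain C0 where "C0 \<in> \<C>" "x \<in> C0" using cov by blast
        then have "C0 \<in> {C\<in>\<C>. x \<in> C}" by blast
        then have "\<exists>z\<in>{C\<in>\<C>. x \<in> C}. \<forall>y. (y, z) \<in> r - Id \<longrightarrow> y \<notin> {C\<in>\<C>. x \<in> C}"
          by (rule wf_eq_minimal[THEN iffD1, OF wf, rule_format])
        then obtain z where z: "z \<in> {C\<in>\<C>. x \<in> C}" "\<And>y. (y, z) \<in> r - Id \<Longrightarrow> y \<notin> {C\<in>\<C>. x \<in> C}"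
          by blast
        have "x \<in> D z" unfolding D_def using z by blast
        then show "x \<in> \<Union>(D ` \<C>)" using z(1) by blast
      qed
    qed
    fix E assume "E \<in> D ` \<C>"
    then obtain C where C: "C \<in> \<C>" "E = D C" by blast
    let ?S = "{C'\<in>\<C>. (C',C) \<in> r \<and> C' \<noteq> C}"
    have o1: "openin Y (\<Union>?S)" using clo by (intro openin_Union) blast
    have c1: "closedin Y (\<Union>?S)"
      using clo by (intro closedin_locally_finite_Union locally_finite_in_subset[OF lf]) auto
    have c2: "closedin Y C" and o2: "openin Y C" using C clo by auto
    show "closedin Y E" unfolding C(2) D_def using c2 o1 by (rule closedin_diff)
    show "openin Y E" unfolding C(2) D_def using o2 c1 by (rule openin_diff)
    show "\<exists>C\<in>\<C>. E \<subseteq> C" using C unfolding D_def by blast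
  qed
qed

lemma lf_compact_finite:
  assumes lf: "locally_finite_in T \<A>" and K: "compactin T K"
  shows "finite {A\<in>\<A>. T closure_of A \<inter> K \<noteq> {}}"
proof -
  have KT: "K \<subseteq> topspace T" using K compactin_subset_topspace by blast
  have "\<forall>x\<in>K. \<exists>N. openin T N \<and> x \<in> N \<and> finite {A\<in>\<A>. A \<inter> N \<noteq> {}}"
    using lf KT unfolding locally_finite_in_def by blast
  then have "\<exists>N. \<forall>x\<in>K. openin T (N x) \<and> x \<in> N x \<and> finite {A\<in>\<A>. A \<inter> N x \<noteq> {}}" by (rule bchoice)
  then obtain N where N: "\<forall>x\<in>K. openin T (N x) \<and> x \<in> N x \<and> finite {A\<in>\<A>. A \<inter> N x \<noteq> {}}"
    ..
  have "(\<forall>U\<in>N ` K. openin T U) \<and> K \<subseteq> \<Union>(N ` K)" using N by blast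
  then obtain F where F: "finite F" "F \<subseteq> N ` K" "K \<subseteq> \<Union>F"
    using K unfolding compactin_def by meson
  then obtain K' where K': "K' \<subseteq> K" "finite K'" "F = N ` K'" using finite_subset_image by metis
  have "{A\<in>\<A>. T closure_of A \<inter> K \<noteq> {}} \<subseteq> (\<Union>x\<in>K'. {A\<in>\<A>. A \<inter> N x \<noteq> {}})"
  proof
    fix A assume A: "A \<in> {A\<in>\<A>. T closure_of A \<inter> K \<noteq> {}}"
    then obtain z where z: "z \<in> T closure_of A" "z \<in> K" by blast
    then obtain x where x: "x \<in> K'" "z \<in> N x" using F(3) K'(3) by blast
    have "openin T (N x)" using N x K' by blast
    then have "A \<inter> N x \<noteq> {}" using openin_Int_closure_of_eq_empty z x by blast
    then show "A \<in> (\<Union>x\<in>K'. {A\<in>\<A>. A \<inter> N x \<noteq> {}})" using A x by blast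
  qed
  moreover have "finite (\<Union>x\<in>K'. {A\<in>\<A>. A \<inter> N x \<noteq> {}})"
    using K' N by blast
  ultimately show ?thesis using finite_subset by blast
qed

lemma clopen_between:
  assumes zd: "\<And>Ob x. openin X Ob \<Longrightarrow> x \<in> Ob \<Longrightarrow> \<exists>C. closedin X C \<and> openin X C \<and> x \<in> C \<and> C \<subseteq> Ob"
    and K: "compactin X K" and O: "openin X Ob" "K \<subseteq> Ob"
  shows "\<exists>H. closedin X H \<and> openin X H \<and> K \<subseteq> H \<and> H \<subseteq> Ob"
proof -
  have "\<forall>x\<in>K. \<exists>C. closedin X C \<and> openin X C \<and> x \<in> C \<and> C \<subseteq> Ob" using zd O by blast
  then have "\<exists>c. \<forall>x\<in>K. closedin X (c x) \<and> openin X (c x) \<and> x \<in> c x \<and> c x \<subseteq> Ob" by (rule bchoice)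
  then obtain c where c: "\<forall>x\<in>K. closedin X (c x) \<and> openin X (c x) \<and> x \<in> c x \<and> c x \<subseteq> Ob"
    ..
  have "(\<forall>U\<in>c ` K. openin X U) \<and> K \<subseteq> \<Union>(c ` K)" using c by blast
  then obtain F where F: "finite F" "F \<subseteq> c ` K" "K \<subseteq> \<Union>F"
    using K unfolding compactin_def by meson
  have "closedin X (\<Union>F)" using F c by (intro closedin_Union) auto
  moreover have "openin X (\<Union>F)" using F c by (intro openin_Union) auto
  moreover have "\<Union>F \<subseteq> Ob" using F c by blast
  ultimately show ?thesis using F(3) by blast
qed



lemma clopen_refine:
  assumes comp: "compact_space X"
    and zd: "\<And>Ob x. openin X Ob \<Longrightarrow> x \<in> Ob \<Longrightarrow> \<exists>C. closedin X C \<and> openin X C \<and> x \<in> C \<and> C \<subseteq> Ob"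
    and Y: "openin X Y"
    and lf: "locally_finite_in (subtopology X Y) \<V>"
    and Vo: "\<forall>V\<in>\<V>. openin X V" and Vc: "\<Union>\<V> = Y"
    and G: "\<forall>G\<in>\<G>. closedin X G \<and> openin X G \<and> G \<subseteq> Y"
    and VG: "\<forall>V\<in>\<V>. \<exists>G\<in>\<G>. V \<subseteq> G"
  shows "\<exists>\<H>. locally_finite_in (subtopology X Y) \<H> \<and> \<Union>\<H> = Y \<and>
              (\<forall>H\<in>\<H>. closedin X H \<and> openin X H \<and> (\<exists>G\<in>\<G>. H \<subseteq> G))"
proof -
  let ?T = "subtopology X Y"
  define cl where "cl V = X closure_of V" for V
  have Ysub: "Y \<subseteq> topspace X" using Y openin_subset by blast
  have tT: "topspace ?T = Y" using Ysub by auto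
  have clY: "cl V \<subseteq> Y" if VV: "V \<in> \<V>" for V
  proof -
    obtain G where GG: "G \<in> \<G>" "V \<subseteq> G" using bspec[OF VG VV] by blast
    have cG: "closedin X G" "G \<subseteq> Y" using G GG(1) by auto
    have "cl V \<subseteq> G" unfolding cl_def by (rule closure_of_minimal[OF GG(2) cG(1)])
    then show ?thesis using cG(2) by blast
  qed
  have Vcl: "V \<subseteq> cl V" if "V \<in> \<V>" for V
    unfolding cl_def using that Vo closure_of_subset openin_subset by metis
  have Tcl: "?T closure_of V = cl V" if "V \<in> \<V>" for V
    using clY[OF that] unfolding cl_def closure_of_subtopology_open[OF disjI1, OF Y] by blast
  have ccl: "compactin X (cl V)" for V
    unfolding cl_def using comp closedin_compact_space closedin_closure_of by blast
  define Ov where "Ov V = Y - \<Union>{cl W | W. W \<in> \<V> \<and> cl W \<inter> cl V = {}}" for V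
  have oOv: "openin X (Ov V)" for V
  proof -
    have sub: "{cl W | W. W \<in> \<V> \<and> cl W \<inter> cl V = {}} \<subseteq> (\<lambda>S. ?T closure_of S) ` \<V>"
      using Tcl by force
    have "closedin ?T (\<Union>{cl W | W. W \<in> \<V> \<and> cl W \<inter> cl V = {}})"
    proof (rule closedin_locally_finite_Union)
      show "locally_finite_in ?T {cl W | W. W \<in> \<V> \<and> cl W \<inter> cl V = {}}"
        by (rule locally_finite_in_subset[OF locally_finite_in_closure[OF lf] sub])
      fix S assume "S \<in> {cl W | W. W \<in> \<V> \<and> cl W \<inter> cl V = {}}"
      then obtain W where "W \<in> \<V>" "S = cl W" by blast
      then show "closedin ?T S" using Tcl closedin_closure_of by metis
    qed
    then have "openin ?T (topspace ?T - \<Union>{cl W | W. W \<in> \<V> \<and> cl W \<inter> cl V = {}})"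
      by (rule openin_diff[OF openin_topspace])
    then have "openin ?T (Ov V)" unfolding Ov_def tT .
    then show ?thesis using Y openin_trans_full by blast
  qed
  have clOv: "cl V \<subseteq> Ov V" if "V \<in> \<V>" for V
    unfolding Ov_def using clY[OF that] by blast
  have "\<forall>V\<in>\<V>. \<exists>H. closedin X H \<and> openin X H \<and> cl V \<subseteq> H \<and> H \<subseteq> Ov V \<and> (\<exists>G\<in>\<G>. H \<subseteq> G)"
  proof
    fix V assume V: "V \<in> \<V>"
    obtain G where GV: "G \<in> \<G>" "V \<subseteq> G" using VG V by blast
    have cG: "closedin X G" "openin X G" using G GV(1) by auto
    have "cl V \<subseteq> G" unfolding cl_def by (rule closure_of_minimal[OF GV(2) cG(1)])
    then have s1: "cl V \<subseteq> Ov V \<inter> G" using clOv[OF V] by blast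
    have o1: "openin X (Ov V \<inter> G)" using oOv cG(2) by blast
    obtain H where "closedin X H" "openin X H" "cl V \<subseteq> H" "H \<subseteq> Ov V \<inter> G"
      using clopen_between[OF zd ccl[of V] o1 s1] by blast
    then show "\<exists>H. closedin X H \<and> openin X H \<and> cl V \<subseteq> H \<and> H \<subseteq> Ov V \<and> (\<exists>G\<in>\<G>. H \<subseteq> G)"
      using GV by blast
  qed
  then have "\<exists>h. \<forall>V\<in>\<V>. closedin X (h V) \<and> openin X (h V) \<and> cl V \<subseteq> h V \<and> h V \<subseteq> Ov V \<and> (\<exists>G\<in>\<G>. h V \<subseteq> G)"
    by (rule bchoice)
  then obtain h where h: "\<forall>V\<in>\<V>. closedin X (h V) \<and> openin X (h V) \<and> cl V \<subseteq> h V \<and> h V \<subseteq> Ov V \<and> (\<exists>G\<in>\<G>. h V \<subseteq> G)" ..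
  have hY: "h V \<subseteq> Y" if "V \<in> \<V>" for V using h that unfolding Ov_def by blast
  show ?thesis
  proof (intro exI[of _ "h ` \<V>"] conjI ballI)
    show "\<Union>(h ` \<V>) = Y"
    proof
      show "\<Union>(h ` \<V>) \<subseteq> Y" using hY by blast
      show "Y \<subseteq> \<Union>(h ` \<V>)"
      proof
        fix y assume "y \<in> Y"
        then obtain V where "V \<in> \<V>" "y \<in> V" using Vc by blast
        then have "y \<in> h V" using Vcl h by blast
        then show "y \<in> \<Union>(h ` \<V>)" using \<open>V \<in> \<V>\<close> by blast
      qed
    qed
    fix H assume "H \<in> h ` \<V>"
    then obtain V where V: "V \<in> \<V>" "H = h V" by blast
    show "closedin X H" using h V by blast
    show "openin X H" using h V by blast
    show "\<exists>G\<in>\<G>. H \<subseteq> G" using h V by blast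
  next
    show "locally_finite_in ?T (h ` \<V>)"
      unfolding locally_finite_in_def
    proof (intro conjI ballI)
      show "\<Union>(h ` \<V>) \<subseteq> topspace ?T" using hY tT by blast
      fix y assume "y \<in> topspace ?T"
      then obtain M where M: "openin ?T M" "y \<in> M" "finite {V\<in>\<V>. V \<inter> M \<noteq> {}}"
        using lf unfolding locally_finite_in_def by blast
      have MY: "M \<subseteq> Y" using M(1) openin_subset tT by metis
      let ?F = "{V\<in>\<V>. V \<inter> M \<noteq> {}}"
      have "{V\<in>\<V>. h V \<inter> M \<noteq> {}} \<subseteq> (\<Union>W\<in>?F. {V\<in>\<V>. ?T closure_of V \<inter> cl W \<noteq> {}})"
      proof
        fix V assume V: "V \<in> {V\<in>\<V>. h V \<inter> M \<noteq> {}}"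
        then obtain z where z: "z \<in> h V" "z \<in> M" by blast
        then obtain W where W: "W \<in> \<V>" "z \<in> W" using MY Vc by blast
        then have WF: "W \<in> ?F" using z by blast
        have zcl: "z \<in> cl W" using W Vcl by blast
        have "z \<in> Ov V" using h V z by blast
        then have "cl W \<inter> cl V \<noteq> {}" using zcl W unfolding Ov_def by blast
        then have "?T closure_of V \<inter> cl W \<noteq> {}" using Tcl V by auto
        then show "V \<in> (\<Union>W\<in>?F. {V\<in>\<V>. ?T closure_of V \<inter> cl W \<noteq> {}})" using WF V by blast
      qed
      moreover have "finite (\<Union>W\<in>?F. {V\<in>\<V>. ?T closure_of V \<inter> cl W \<noteq> {}})"
      proof (rule finite_UN_I[OF M(3)])
        fix W assume "W \<in> ?F"
        then have "compactin ?T (cl W)" using ccl clY by (simp add: compactin_subtopology)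
        then show "finite {V\<in>\<V>. ?T closure_of V \<inter> cl W \<noteq> {}}"
          by (rule lf_compact_finite[OF lf])
      qed
      ultimately have "finite {V\<in>\<V>. h V \<inter> M \<noteq> {}}" using finite_subset by blast
      then have "finite (h ` {V\<in>\<V>. h V \<inter> M \<noteq> {}})" by blast
      moreover have "{U \<in> h ` \<V>. U \<inter> M \<noteq> {}} \<subseteq> h ` {V\<in>\<V>. h V \<inter> M \<noteq> {}}" by blast
      ultimately have "finite {U \<in> h ` \<V>. U \<inter> M \<noteq> {}}" using finite_subset by blast
      then show "\<exists>M. openin ?T M \<and> y \<in> M \<and> finite {U \<in> h ` \<V>. U \<inter> M \<noteq> {}}" using M by blast
    qed
  qed
qed



lemma backward:
  assumes comp: "compact_space X" and H: "Hausdorff_space X" and sc: "scattered_space X"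
    and hp: "hereditarily_paracompact_space X"
  shows "classA X"
proof -
  have zd: "\<And>Ob x. openin X Ob \<Longrightarrow> x \<in> Ob \<Longrightarrow> \<exists>C. closedin X C \<and> openin X C \<and> x \<in> C \<and> C \<subseteq> Ob"
    by (rule zero_dim[OF comp H sc])
  define good where "good C \<longleftrightarrow> closedin X C \<and> openin X C \<and> classA (subtopology X C)" for C
  have good_sub: "good D" if gC: "good C" and cD: "closedin X D" and oD: "openin X D" and DC: "D \<subseteq> C" for C D
  proof -
    have c1: "closedin (subtopology X C) D" using cD DC by (rule closedin_subset_topspace)
    have o1: "openin (subtopology X C) D" using oD DC unfolding openin_subtopology by blast
    have cA: "classA (subtopology X C)" using gC good_def by blast
    have "classA (subtopology (subtopology X C) D)"
      by (rule classA_clopen[OF cA c1 o1])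
    moreover have "subtopology (subtopology X C) D = subtopology X D"
      using DC by (simp add: subtopology_subtopology inf_absorb2)
    ultimately show ?thesis using cD oD good_def by simp
  qed
  define B where "B = topspace X - \<Union>{C. good C}"
  have B: "B = {}"
  proof (rule ccontr)
    assume Bne: "B \<noteq> {}"
    have Bt: "B \<subseteq> topspace X" using B_def by blast
    have "B \<subseteq> topspace X \<and> B \<noteq> {}" using Bt Bne by blast
    then have "\<exists>b\<in>B. openin (subtopology X B) {b}"
      by (rule sc[unfolded scattered_space_def, rule_format])
    then obtain b where b: "b \<in> B" "openin (subtopology X B) {b}" by blast
    then obtain W where W: "openin X W" "{b} = W \<inter> B" unfolding openin_subtopology by blast
    have bt: "b \<in> topspace X" using b Bt by blast
    have bW: "b \<in> W" using W by blast
    obtain N where N: "closedin X N" "openin X N" "b \<in> N" "N \<subseteq> W" using zd[OF W(1) bW] by blast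
    have Nt: "N \<subseteq> topspace X" using N(2) openin_subset by blast
    have NB: "N \<inter> B = {b}" using W N b by blast
    define Y where "Y = N - {b}"
    have cb: "closedin X {b}" using bt by (intro closedin_t1_singleton Hausdorff_imp_t1_space[OF H])
    have oY: "openin X Y" unfolding Y_def using N(2) cb by (rule openin_diff)
    have Yt: "Y \<subseteq> topspace X" using Nt Y_def by blast
    have tY: "topspace (subtopology X Y) = Y" using Yt by auto
    have Ygood: "\<exists>C. good C \<and> y \<in> C" if yY: "y \<in> Y" for y
    proof -
      have "y \<notin> B" using yY NB Y_def by blast
      then show ?thesis using yY Yt B_def by blast
    qed
    define \<G> where "\<G> = {G. good G \<and> G \<subseteq> Y}"
    have Gprop: "\<forall>G\<in>\<G>. closedin X G \<and> openin X G \<and> G \<subseteq> Y" unfolding \<G>_def good_def by blast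
    have Gcov: "\<Union>\<G> = Y"
    proof
      show "\<Union>\<G> \<subseteq> Y" unfolding \<G>_def by blast
      show "Y \<subseteq> \<Union>\<G>"
      proof
        fix y assume yY: "y \<in> Y"
        obtain C where C: "good C" "y \<in> C" using Ygood[OF yY] by blast
        have "openin X (C \<inter> Y)" using C(1) oY good_def by blast
        moreover have "y \<in> C \<inter> Y" using C yY by blast
        ultimately obtain C' where C': "closedin X C'" "openin X C'" "y \<in> C'" "C' \<subseteq> C \<inter> Y"
          using zd by blast
        have "good C'" using good_sub[OF C(1) C'(1) C'(2)] C'(4) by blast
        then have "C' \<in> \<G>" using C'(4) \<G>_def by blast
        then show "y \<in> \<Union>\<G>" using C'(3) by blast
      qed
    qed
    have pcY: "paracompact_space (subtopology X Y)"
      using hp Yt unfolding hereditarily_paracompact_space_def by blast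
    have "(\<forall>G\<in>\<G>. openin (subtopology X Y) G) \<and> \<Union>\<G> = topspace (subtopology X Y)"
      using Gprop Gcov tY unfolding openin_subtopology by blast
    then have "\<exists>\<V>. (\<forall>V\<in>\<V>. openin (subtopology X Y) V) \<and> \<Union>\<V> = topspace (subtopology X Y) \<and>
             (\<forall>V\<in>\<V>. \<exists>U\<in>\<G>. V \<subseteq> U) \<and> locally_finite_in (subtopology X Y) \<V>"
      by (rule pcY[unfolded paracompact_space_def, rule_format])
    then obtain \<V> where V: "\<forall>V\<in>\<V>. openin (subtopology X Y) V" "\<Union>\<V> = topspace (subtopology X Y)"
      "\<forall>V\<in>\<V>. \<exists>U\<in>\<G>. V \<subseteq> U" "locally_finite_in (subtopology X Y) \<V>"
      by blast
    have Vo: "\<forall>V\<in>\<V>. openin X V" using V(1) oY openin_trans_full by blast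
    have Vc: "\<Union>\<V> = Y" using V(2) tY by simp
    obtain \<H> where Hh: "locally_finite_in (subtopology X Y) \<H>" "\<Union>\<H> = Y"
      "\<forall>H\<in>\<H>. closedin X H \<and> openin X H \<and> (\<exists>G\<in>\<G>. H \<subseteq> G)"
      using clopen_refine[OF comp zd oY V(4) Vo Vc Gprop V(3)] by blast
    have HY: "\<forall>C\<in>\<H>. closedin (subtopology X Y) C \<and> openin (subtopology X Y) C"
    proof
      fix C assume "C \<in> \<H>"
      then have "closedin X C" "openin X C" "C \<subseteq> Y" using Hh(3) Gprop by blast+
      then show "closedin (subtopology X Y) C \<and> openin (subtopology X Y) C"
        using closedin_subset_topspace unfolding openin_subtopology by blast
    qed
    have Hcov: "\<Union>\<H> = topspace (subtopology X Y)" using Hh(2) tY by simp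
    obtain \<D> where D: "pairwise disjnt \<D>" "\<Union>\<D> = topspace (subtopology X Y)"
      "\<forall>D\<in>\<D>. closedin (subtopology X Y) D \<and> openin (subtopology X Y) D \<and> (\<exists>C\<in>\<H>. D \<subseteq> C)"
      using disjointify[OF Hh(1) HY Hcov] by (elim exE conjE) (rule that)
    have Dgood: "good D \<and> D \<subseteq> Y" if DD: "D \<in> \<D>" for D
    proof -
      obtain C where C: "C \<in> \<H>" "D \<subseteq> C" using D(3) DD by blast
      obtain G where G: "G \<in> \<G>" "C \<subseteq> G" using Hh(3) C(1) by blast
      have gG: "good G" "G \<subseteq> Y" using G(1) \<G>_def by auto
      have DY: "D \<subseteq> Y" using C G gG by blast
      have oD: "openin X D" using D(3) DD oY openin_trans_full by blast
      obtain F where F: "closedin X F" "D = F \<inter> Y" using D(3) DD unfolding closedin_subtopology by blast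
      have "D = F \<inter> G" using F C G gG by blast
      moreover have "closedin X G" using gG good_def by blast
      ultimately have cD: "closedin X D" using F(1) by (simp add: closedin_Int)
      have "good D" using good_sub[OF gG(1) cD oD] C G by blast
      then show ?thesis using DY by blast
    qed
    have tN: "topspace (subtopology X N) = N" using Nt by auto
    have bcl: "b \<in> X closure_of (N - {b})"
    proof (rule ccontr)
      assume "b \<notin> X closure_of (N - {b})"
      then obtain T where T: "openin X T" "b \<in> T" "\<forall>y\<in>N - {b}. y \<notin> T"
        using bt unfolding in_closure_of by blast
      have "{b} = T \<inter> N" using T N(3) by blast
      then have ob: "openin X {b}" using T(1) N(2) by (simp add: openin_Int)
      have "topspace (subtopology X {b}) = {b}" using bt by auto
      then have "classA (subtopology X {b})" by (rule classA.point)
      then have "good {b}" using ob cb good_def by blast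
      then show False using b(1) B_def by blast
    qed
    have "classA (subtopology X N)"
    proof (rule classA.alex[where P="{b}" and \<U>=\<D>])
      show "compact_space (subtopology X N)"
        using comp N(1) closedin_compact_space compact_space_subtopology by blast
      show "Hausdorff_space (subtopology X N)" using H Hausdorff_space_subtopology by blast
      show "{b} \<subseteq> topspace (subtopology X N)" using tN N(3) by simp
      show "{b} = {} \<or> (\<exists>p. {b} = {p})" by blast
      have "N \<subseteq> X closure_of (N - {b})"
        using bcl closure_of_subset[of "N - {b}" X] Nt by blast
      then show "subtopology X N closure_of (topspace (subtopology X N) - {b}) = topspace (subtopology X N)"
        unfolding tN closure_of_subtopology_open[OF disjI1, OF N(2)] by blast
      show "\<Union>\<D> = topspace (subtopology X N) - {b}" using D(2) tY tN Y_def by simp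
      show "pairwise disjnt \<D>" by (rule D(1))
      show "\<forall>U\<in>\<D>. openin (subtopology X N) U \<and> classA (subtopology (subtopology X N) U)"
      proof
        fix U assume UD: "U \<in> \<D>"
        then have gU: "good U" and UY: "U \<subseteq> Y" using Dgood by blast+
        then have UN: "U \<subseteq> N" using Y_def by blast
        have "openin (subtopology X N) U" using gU UN unfolding good_def openin_subtopology by blast
        moreover have "subtopology (subtopology X N) U = subtopology X U"
          using UN by (simp add: subtopology_subtopology inf_absorb2)
        ultimately show "openin (subtopology X N) U \<and> classA (subtopology (subtopology X N) U)"
          using gU good_def by simp
      qed
    qed
    then have "good N" using N good_def by blast
    then show False using b(1) N(3) B_def by blast
  qed
  have "\<forall>U\<in>{C. good C}. openin X U" using good_def by blast
  moreover have "topspace X \<subseteq> \<Union>{C. good C}" using B B_def by blast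
  ultimately obtain F where F: "finite F" "F \<subseteq> {C. good C}" "topspace X \<subseteq> \<Union>F"
    using comp unfolding compact_space_def compactin_def by meson
  have Ft: "\<Union>F \<subseteq> topspace X" using F(2) good_def openin_subset by blast
  have lfF: "locally_finite_in X F" using F(1) Ft by (rule finite_imp_locally_finite_in)
  have cF: "\<forall>C\<in>F. closedin X C \<and> openin X C" using F(2) good_def by blast
  have Fcov: "\<Union>F = topspace X" using F(3) Ft by blast
  obtain \<D> where D: "pairwise disjnt \<D>" "\<Union>\<D> = topspace X"
      "\<forall>D\<in>\<D>. closedin X D \<and> openin X D \<and> (\<exists>C\<in>F. D \<subseteq> C)"
    using disjointify[OF lfF cF Fcov] by (elim exE conjE) (rule that)
  show ?thesis
  proof (rule classA.alex[where P="{}" and \<U>=\<D>])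
    show "compact_space X" by (rule comp)
    show "Hausdorff_space X" by (rule H)
    show "{} \<subseteq> topspace X" by simp
    show "{} = {} \<or> (\<exists>p. {} = {p})" by simp
    show "X closure_of (topspace X - {}) = topspace X" by simp
    show "\<Union>\<D> = topspace X - {}" using D(2) by simp
    show "pairwise disjnt \<D>" by (rule D(1))
    show "\<forall>U\<in>\<D>. openin X U \<and> classA (subtopology X U)"
    proof
      fix U assume UD: "U \<in> \<D>"
      then obtain C where C: "C \<in> F" "U \<subseteq> C" "closedin X U" "openin X U" using D(3) by blast
      have "good C" using C(1) F(2) by blast
      then have "good U" using good_sub C by blast
      then show "openin X U \<and> classA (subtopology X U)" using good_def by blast
    qed
  qed
qed


lemma forward:
  assumes "classA X"
  shows "scattered_space X \<and> hereditarily_paracompact_space X"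
  using assms
proof (induction rule: classA.induct)
  case (empty X)
  then show ?case using scattered_finite[of X undefined] hp_finite[of X] by simp
next
  case (point X a)
  then show ?case using scattered_finite[of X a] hp_finite[of X] by simp
next
  case (alex X P \<U>)
  have IH1: "\<forall>U\<in>\<U>. openin X U \<and> scattered_space (subtopology X U)" using alex.IH by blast
  have IH2: "\<forall>U\<in>\<U>. openin X U \<and> hereditarily_paracompact_space (subtopology X U)" using alex.IH by blast
  show ?case
    using alex_scattered[OF alex.hyps(3) alex.hyps(4) alex.hyps(6) IH1]
      alex_hp[OF alex.hyps(1) alex.hyps(2) alex.hyps(3) alex.hyps(4) alex.hyps(6) alex.hyps(7) IH2]
    by blast
qed

theorem lemma3:
  fixes X :: "'a topology"
  assumes "compact_space X" and "Hausdorff_space X"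
  shows "classA X \<longleftrightarrow> scattered_space X \<and> hereditarily_paracompact_space X"
  using forward backward[OF assms] by blast

end
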